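(* Let $G$ be a finite primitive unitary reflection group of rank at least 2, let $P=\langle r\rangle$ be a parabolic subgroup of rank 1, where $r$ is a reflection of order $k$, and let $a$ be a root of $r$. Let $\boldsymbol\mu=\{\xi\in\mathbb{C}: ga=\xi a\text{ for some }g\in N_G(P)\}$ (a finite cyclic group whose order $m$ is a multiple of $k$) and $B=\{\xi^ka:\xi\in\boldsymbol\mu\}$. If $m/k$ and $k$ are coprime, then the setwise stabiliser $G_B$ of $B$ in $G$ is a complement to $P$ in $N_G(P)$. Conversely, if for some set $D$ of scalar multiples of $a$ the setwise stabiliser $G_D$ is a complement to $P$ in $N_G(P)$, then $m/k$ and $k$ are coprime.
   Context: $V$ is a finite-dimensional complex vector space with a positive definite Hermitian form. A reflection is a finite-order linear map whose fixed space is a hyperplane; a root of a reflection is a non-zero vector orthogonal to its fixed hyperplane. A unitary reflection group is a finite group of form-preserving linear maps of $V$ generated by reflections; its rank is $\dim V$. $G$ is primitive if there is no decomposition $V=V_1\oplus\cdots\oplus V_k$, $k>1$, into non-zero subspaces permuted by $G$. A parabolic subgroup is the pointwise stabiliser in $G$ of a subset of $V$; rank 1 means its fixed space is a hyperplane. A complement to $P$ in $N_G(P)$ is a subgroup $H$ with $N_G(P)=PH$, $P\cap H=1$. *)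

theory Defs
  imports "HOL-Analysis.Analysis"
begin

text \<open>V = complex ^ 'n with the standard positive definite Hermitian form;
linear maps of V are n x n complex matrices acting by (*v).\<close>

type_synonym 'n cmat = "complex ^ ('n::finite) ^ 'n"

definition herm :: "complex ^ ('n::finite) \<Rightarrow> complex ^ 'n \<Rightarrow> complex" where
  "herm x y = (\<Sum>i\<in>UNIV. x $ i * cnj (y $ i))"

definition mpow :: "('n::finite) cmat \<Rightarrow> nat \<Rightarrow> 'n cmat" where
  "mpow A j = (((**) A) ^^ j) (mat 1)"

definition unitary :: "('n::finite) cmat \<Rightarrow> bool" where
  "unitary A \<longleftrightarrow> (\<forall>x y. herm (A *v x) (A *v y) = herm x y)"

definition fixed_space :: "('n::finite) cmat \<Rightarrow> (complex ^ 'n) set" where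
  "fixed_space A = {x. A *v x = x}"

definition hyperplane :: "(complex ^ 'n) set \<Rightarrow> bool" where
  "hyperplane W \<longleftrightarrow> vec.subspace W \<and> vec.dim W = CARD('n) - 1"

definition is_reflection :: "('n::finite) cmat \<Rightarrow> bool" where
  "is_reflection A \<longleftrightarrow> (\<exists>j>0. mpow A j = mat 1) \<and> hyperplane (fixed_space A)"

definition is_root :: "('n::finite) cmat \<Rightarrow> complex ^ 'n \<Rightarrow> bool" where
  "is_root A a \<longleftrightarrow> a \<noteq> 0 \<and> (\<forall>x\<in>fixed_space A. herm x a = 0)"

definition mat_order :: "('n::finite) cmat \<Rightarrow> nat" where
  "mat_order A = (LEAST j. j > 0 \<and> mpow A j = mat 1)"

text \<open>The submonoid generated by a set of matrices (for a finite set of invertible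
matrices this is the generated subgroup).\<close>
inductive_set mgen :: "('n::finite) cmat set \<Rightarrow> 'n cmat set" for R where
  one: "mat 1 \<in> mgen R"
| step: "r \<in> R \<Longrightarrow> x \<in> mgen R \<Longrightarrow> r ** x \<in> mgen R"

definition is_subgroup :: "('n::finite) cmat set \<Rightarrow> bool" where
  "is_subgroup H \<longleftrightarrow> mat 1 \<in> H \<and> (\<forall>g\<in>H. \<forall>h\<in>H. g ** h \<in> H)
     \<and> (\<forall>g\<in>H. invertible g \<and> matrix_inv g \<in> H)"

definition unitary_reflection_group :: "('n::finite) cmat set \<Rightarrow> bool" where
  "unitary_reflection_group G \<longleftrightarrow> finite G \<and> is_subgroup G \<and> (\<forall>g\<in>G. unitary g)
     \<and> G = mgen {r\<in>G. is_reflection r}"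

definition primitive :: "('n::finite) cmat set \<Rightarrow> bool" where
  "primitive G \<longleftrightarrow> \<not> (\<exists>S :: (complex ^ 'n) set set.
       finite S \<and> card S > 1
     \<and> (\<forall>W\<in>S. vec.subspace W \<and> W \<noteq> {0})
     \<and> vec.span (\<Union>S) = UNIV
     \<and> (\<forall>W\<in>S. W \<inter> vec.span (\<Union>(S - {W})) = {0})
     \<and> (\<forall>g\<in>G. \<forall>W\<in>S. (\<lambda>x. g *v x) ` W \<in> S))"

definition pointwise_stab :: "('n::finite) cmat set \<Rightarrow> (complex ^ 'n) set \<Rightarrow> 'n cmat set" where
  "pointwise_stab G X = {g\<in>G. \<forall>x\<in>X. g *v x = x}"

definition setwise_stab :: "('n::finite) cmat set \<Rightarrow> (complex ^ 'n) set \<Rightarrow> 'n cmat set" where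
  "setwise_stab G X = {g\<in>G. (\<lambda>x. g *v x) ` X = X}"

definition parabolic :: "('n::finite) cmat set \<Rightarrow> 'n cmat set \<Rightarrow> bool" where
  "parabolic G P \<longleftrightarrow> (\<exists>X. P = pointwise_stab G X)"

definition parabolic_rank1 :: "('n::finite) cmat set \<Rightarrow> 'n cmat set \<Rightarrow> bool" where
  "parabolic_rank1 G P \<longleftrightarrow> parabolic G P \<and> hyperplane {x. \<forall>g\<in>P. g *v x = x}"

definition normaliser :: "('n::finite) cmat set \<Rightarrow> 'n cmat set \<Rightarrow> 'n cmat set" where
  "normaliser G P = {g\<in>G. (\<lambda>p. g ** p ** matrix_inv g) ` P = P}"

definition complement :: "('n::finite) cmat set \<Rightarrow> 'n cmat set \<Rightarrow> 'n cmat set \<Rightarrow> bool" where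
  "complement P N H \<longleftrightarrow> is_subgroup H \<and> H \<subseteq> N
     \<and> {p ** h | p h. p \<in> P \<and> h \<in> H} = N \<and> P \<inter> H = {mat 1}"

end

theory Submission imports Defs begin


lemma herm_add_left: "herm (x + y) z = herm x z + herm y z"
  by (simp add: herm_def distrib_right sum.distrib)
lemma herm_add_right: "herm z (x + y) = herm z x + herm z y"
  by (simp add: herm_def distrib_left sum.distrib)
lemma herm_smult_left: "herm (c *s x) y = c * herm x y"
  by (simp add: herm_def sum_distrib_left mult.assoc)
lemma herm_smult_right: "herm x (c *s y) = cnj c * herm x y"
  by (simp add: herm_def sum_distrib_left mult_ac)
lemma herm_sym: "herm y x = cnj (herm x y)"
  by (simp add: herm_def mult.commute)
lemma herm_zero_left[simp]: "herm 0 y = 0" by (simp add: herm_def)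
lemma herm_self_eq_0: assumes "herm x x = 0" shows "x = 0"
proof -
  have "complex_of_real (\<Sum>i\<in>UNIV. (Re (x$i))\<^sup>2 + (Im (x$i))\<^sup>2) = herm x x"
    unfolding herm_def of_real_sum by (simp add: complex_mult_cnj)
  with assms have "(\<Sum>i\<in>UNIV. (Re (x$i))\<^sup>2 + (Im (x$i))\<^sup>2) = 0" by (metis of_real_eq_0_iff)
  then have "\<forall>i\<in>UNIV. (Re (x$i))\<^sup>2 + (Im (x$i))\<^sup>2 = 0"
    by (subst (asm) sum_nonneg_eq_0_iff) auto
  then show ?thesis by (simp add: vec_eq_iff complex_eq_iff)
qed

lemma image_fix: assumes "\<And>x. x \<in> A \<Longrightarrow> f x = x" shows "f ` A = A"
proof
  show "f ` A \<subseteq> A" using assms by auto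
  show "A \<subseteq> f ` A"
  proof
    fix x assume "x \<in> A"
    then have "x = f x" using assms by simp
    then show "x \<in> f ` A" using \<open>x \<in> A\<close> by blast
  qed
qed

lemma mpow_0[simp]: "mpow A 0 = mat 1" by (simp add: mpow_def)
lemma mpow_Suc: "mpow A (Suc j) = A ** mpow A j" by (simp add: mpow_def)
lemma mpow_add: "mpow A (i + j) = mpow A i ** mpow A j"
  by (induction i) (simp_all add: mpow_Suc matrix_mul_assoc)
lemma mpow_1_mult: assumes "mpow A k = mat 1" shows "mpow A (k * j) = mat 1"
proof (induction j)
  case (Suc j)
  have "mpow A (k * Suc j) = mpow A k ** mpow A (k * j)" by (simp add: mpow_add[symmetric])
  then show ?case using Suc assms by simp
qed simp

lemma mpow_eig: assumes "A *v x = c *s x" shows "mpow A j *v x = c ^ j *s x"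
  by (induction j) (simp_all add: mpow_Suc matrix_vector_mul_assoc[symmetric]
        vector_scalar_commute assms vector_smult_assoc mult.commute)

lemma mpow_fix: assumes "A *v x = x" shows "mpow A j *v x = x"
  using mpow_eig[of A x 1 j] assms by simp

lemma inv_props: assumes "invertible A"
  shows "A ** matrix_inv A = mat 1" "matrix_inv A ** A = mat 1"
  using someI_ex[OF assms[unfolded invertible_def]] by (auto simp: matrix_inv_def)

lemma smult_cancel: fixes a :: "complex^'n"
  assumes "a \<noteq> 0" "c *s a = d *s a" shows "c = d"
proof -
  obtain i where "a $ i \<noteq> 0" using assms(1) by (metis vec_eq_iff zero_index)
  moreover have "(c *s a)$i = (d *s a)$i" by (simp only: assms(2))
  ultimately show ?thesis by simp
qed

lemma subgroup_mpow: assumes "is_subgroup G" "A \<in> G" shows "mpow A j \<in> G"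
  using assms by (induction j) (auto simp: is_subgroup_def mpow_Suc)

lemma pow_gcd_1: fixes z :: complex
  assumes "z ^ a = 1" "z ^ b = 1" "a \<noteq> 0" shows "z ^ gcd a b = 1"
proof -
  obtain x y where "a * x = b * y + gcd a b" using bezout_nat[OF assms(3)] by blast
  then have "z ^ (a*x) = z ^ (b*y) * z ^ gcd a b" by (simp add: power_add)
  then show ?thesis using assms by (simp add: power_mult)
qed

lemma finite_mult_closed_roots: fixes M :: "complex set"
  assumes "finite M" "0 \<notin> M" "\<And>x y. x \<in> M \<Longrightarrow> y \<in> M \<Longrightarrow> x * y \<in> M" "\<xi> \<in> M"
  shows "\<xi> ^ card M = 1"
proof -
  let ?f = "\<lambda>x. \<xi> * x"
  have inj: "inj_on ?f M" using assms(2,4) by (auto simp: inj_on_def)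
  have sub: "?f ` M \<subseteq> M" using assms(3,4) by auto
  have eq: "?f ` M = M"
    using card_subset_eq[OF assms(1) sub] card_image[OF inj] by simp
  have "prod id M = prod id (?f ` M)" using eq by simp
  also have "\<dots> = prod ?f M" using prod.reindex[OF inj, of id] by simp
  also have "\<dots> = \<xi> ^ card M * prod id M" by (simp add: prod.distrib)
  finally have "(\<xi> ^ card M - 1) * prod id M = 0" by (simp add: algebra_simps)
  moreover have "prod id M \<noteq> 0" using assms(1,2) by (auto simp: prod_zero_iff)
  ultimately show ?thesis by simp
qed


locale L =
  fixes G P :: "('n::finite) cmat set" and r :: "'n cmat" and a :: "complex ^ 'n" and k :: nat
  assumes sg: "is_subgroup G" and finG: "finite G" and unit: "\<forall>g\<in>G. unitary g"
    and rG: "r \<in> G" and refl: "is_reflection r" and Pdef: "P = {mpow r j | j. True}"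
    and kdef: "k = mat_order r" and root: "is_root r a"
begin

definition "H = fixed_space r"

lemma G1: "mat 1 \<in> G" using sg by (simp add: is_subgroup_def)
lemma Gmul: "g \<in> G \<Longrightarrow> h \<in> G \<Longrightarrow> g ** h \<in> G" using sg by (simp add: is_subgroup_def)
lemma Ginv: "g \<in> G \<Longrightarrow> matrix_inv g \<in> G" using sg by (simp add: is_subgroup_def)
lemma Ginvertible: "g \<in> G \<Longrightarrow> invertible g" using sg by (simp add: is_subgroup_def)
lemma Gl: "g \<in> G \<Longrightarrow> matrix_inv g ** g = mat 1" using inv_props Ginvertible by blast
lemma Gr: "g \<in> G \<Longrightarrow> g ** matrix_inv g = mat 1" using inv_props Ginvertible by blast
lemma Gl_v: "g \<in> G \<Longrightarrow> matrix_inv g *v (g *v x) = x"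
  by (simp add: matrix_vector_mul_assoc Gl)
lemma Gr_v: "g \<in> G \<Longrightarrow> g *v (matrix_inv g *v x) = x"
  by (simp add: matrix_vector_mul_assoc Gr)
lemma Gherm: "g \<in> G \<Longrightarrow> herm (g *v x) (g *v y) = herm x y"
  using unit by (simp add: unitary_def)

lemma Hsub: "vec.subspace H" and Hdim: "vec.dim H = CARD('n) - 1"
  using refl by (auto simp: H_def is_reflection_def hyperplane_def)
lemma a_nz: "a \<noteq> 0" using root by (simp add: is_root_def)
lemma perpH: "h \<in> H \<Longrightarrow> herm h a = 0" using root by (simp add: is_root_def H_def)
lemma r_H: "h \<in> H \<Longrightarrow> r *v h = h" by (simp add: H_def fixed_space_def)
lemma a_notin: "a \<notin> H" using perpH herm_self_eq_0 a_nz by blast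

lemma decomp: "\<exists>h\<in>H. \<exists>c. v = h + c *s a"
proof -
  have nsp: "a \<notin> vec.span H" using a_notin Hsub by (metis vec.span_eq_iff)
  have "CARD('n) > 0" by simp
  then have "vec.dim (insert a H) = CARD('n)"
    using vec.dim_insert[of a H] nsp Hdim by simp
  then have "vec.dim (UNIV::(complex^'n) set) \<le> vec.dim (insert a H)"
    using vec_dim_card[where 'a=complex and 'n='n] by simp
  then have "vec.span (insert a H) = vec.span UNIV" by (intro vec.dim_eq_span) simp_all
  then have "vec.span (insert a H) = UNIV" by simp
  then have "v \<in> vec.span (insert a H)" by simp
  then obtain c where "v - c *s a \<in> vec.span H" unfolding vec.span_insert by blast
  then have "v - c *s a \<in> H" using Hsub by (metis vec.span_eq_iff)
  then show ?thesis by (intro bexI[of _ "v - c *s a"] exI[of _ c]) auto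
qed

lemma perp_line: assumes "\<forall>h\<in>H. herm h v = 0" shows "\<exists>c. v = c *s a"
proof -
  obtain h c where h: "h \<in> H" "v = h + c *s a" using decomp by blast
  have "herm h v = herm h h"
    using h perpH by (simp add: herm_add_right herm_smult_right)
  then have "h = 0" using assms h herm_self_eq_0 by simp
  then show ?thesis using h by auto
qed

lemma ortho_a: assumes "herm x a = 0" shows "x \<in> H"
proof -
  obtain h c where h: "h \<in> H" "x = h + c *s a" using decomp by blast
  have "herm x a = c * herm a a"
    using h perpH by (simp add: herm_add_left herm_smult_left)
  moreover have "herm a a \<noteq> 0" using a_nz herm_self_eq_0 by blast
  ultimately have "c = 0" using assms by simp
  then show ?thesis using h by simp
qed

lemma eqHa: assumes "A *v a = B *v a" "\<forall>h\<in>H. A *v h = B *v h" shows "A = B"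
proof -
  have "A *v v = B *v v" for v
  proof -
    obtain h c where h: "h \<in> H" "v = h + c *s a" using decomp by blast
    show ?thesis using assms h by (simp add: matrix_vector_right_distrib vector_scalar_commute)
  qed
  then show ?thesis by (simp add: matrix_eq)
qed

definition "\<omega> = (SOME c. r *v a = c *s a)"

lemma r_a: "r *v a = \<omega> *s a"
proof -
  have "\<forall>h\<in>H. herm h (r *v a) = 0"
  proof
    fix h assume "h \<in> H"
    then have "herm h (r *v a) = herm (r *v h) (r *v a)" by (simp add: r_H)
    also have "\<dots> = herm h a" using Gherm rG by blast
    finally show "herm h (r *v a) = 0" using perpH \<open>h \<in> H\<close> by simp
  qed
  then have "\<exists>c. r *v a = c *s a" using perp_line by blast
  then show ?thesis unfolding \<omega>_def by (rule someI_ex)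
qed

lemma P_a: "mpow r j *v a = \<omega> ^ j *s a" by (rule mpow_eig[OF r_a])
lemma P_H: "h \<in> H \<Longrightarrow> mpow r j *v h = h" by (rule mpow_fix[OF r_H])
lemma PG: "mpow r j \<in> G" using subgroup_mpow sg rG by blast

lemma k_pos: "k > 0" and rk: "mpow r k = mat 1"
proof -
  have ex: "\<exists>j. j > 0 \<and> mpow r j = mat 1" using refl by (auto simp: is_reflection_def)
  have "k > 0 \<and> mpow r k = mat 1" unfolding kdef mat_order_def by (rule LeastI_ex[OF ex])
  then show "k > 0" "mpow r k = mat 1" by auto
qed

lemma om_k: "\<omega> ^ k = 1"
proof -
  have "\<omega> ^ k *s a = 1 *s a" using P_a[of k] rk by simp
  then show ?thesis using smult_cancel a_nz by blast
qed

lemma om_nz: "\<omega> \<noteq> 0"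
proof
  assume "\<omega> = 0"
  then have "\<omega> ^ k = 0" using k_pos by simp
  then show False using om_k by simp
qed

lemma mpow_eq1: "\<omega> ^ j = 1 \<Longrightarrow> mpow r j = mat 1"
  by (rule eqHa) (simp_all add: P_a P_H)

lemma om_dvd: "\<omega> ^ j = 1 \<longleftrightarrow> k dvd j"
proof
  assume "k dvd j"
  then obtain q where "j = k * q" by blast
  then show "\<omega> ^ j = 1" by (simp add: power_mult om_k)
next
  assume "\<omega> ^ j = 1"
  then have j1: "mpow r j = mat 1" by (rule mpow_eq1)
  have "mpow r j = mpow r (k * (j div k)) ** mpow r (j mod k)"
    by (simp add: mpow_add[symmetric])
  then have m1: "mpow r (j mod k) = mat 1" using j1 mpow_1_mult[OF rk] by simp
  show "k dvd j"
  proof (rule ccontr)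
    assume "\<not> k dvd j"
    then have "j mod k > 0" by (simp add: dvd_eq_mod_eq_0)
    then have "(LEAST j. j > 0 \<and> mpow r j = mat 1) \<le> j mod k" using m1 by (intro Least_le) simp
    then have "k \<le> j mod k" by (simp add: kdef mat_order_def)
    then show False using mod_less_divisor[OF k_pos, of j] by linarith
  qed
qed

lemma presH: assumes "g \<in> G" "g *v a = c *s a" "c \<noteq> 0" "h \<in> H" shows "g *v h \<in> H"
proof -
  have ga: "g *v (inverse c *s a) = a"
    using assms by (simp add: vector_scalar_commute vector_smult_assoc)
  have "herm (g *v h) a = herm (g *v h) (g *v (inverse c *s a))" by (simp add: ga)
  also have "\<dots> = herm h (inverse c *s a)" using Gherm assms(1) by blast
  also have "\<dots> = 0" using perpH assms(4) by (simp add: herm_smult_right)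
  finally show ?thesis by (rule ortho_a)
qed

lemma eig_nz: assumes "g \<in> G" "g *v a = c *s a" shows "c \<noteq> 0"
proof
  assume "c = 0"
  then have "a = matrix_inv g *v (g *v a)" using Gl_v assms(1) by simp
  then show False using assms \<open>c = 0\<close> a_nz by simp
qed

lemma inv_eig: assumes "g \<in> G" "g *v a = c *s a" "c * c' = 1"
  shows "matrix_inv g *v a = c' *s a"
proof -
  have "a = c *s (matrix_inv g *v a)"
    using Gl_v[OF assms(1), of a] assms(2) by (simp add: vector_scalar_commute)
  then have "c' *s a = (c' * c) *s (matrix_inv g *v a)" by (metis vector_smult_assoc)
  then show ?thesis using assms(3) by (simp add: mult.commute)
qed

lemma N_char: "g \<in> normaliser G P \<longleftrightarrow> g \<in> G \<and> (\<exists>c. g *v a = c *s a)"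
proof
  assume gN: "g \<in> normaliser G P"
  then have gG: "g \<in> G" and img: "(\<lambda>p. g ** p ** matrix_inv g) ` P = P"
    by (auto simp: normaliser_def)
  have "r = mpow r 1" by (simp add: mpow_Suc)
  then have "r \<in> P" using Pdef by auto
  then have "g ** r ** matrix_inv g \<in> P" using img by blast
  then obtain j where j: "g ** r ** matrix_inv g = mpow r j" using Pdef by auto
  have "\<forall>h\<in>H. herm h (g *v a) = 0"
  proof
    fix h assume hH: "h \<in> H"
    define y where "y = matrix_inv g *v h"
    have "r *v y = matrix_inv g *v ((g ** r ** matrix_inv g) *v h)"
      unfolding y_def using Gl_v[OF gG] by (simp add: matrix_vector_mul_assoc[symmetric])
    also have "\<dots> = y" using j P_H hH by (simp add: y_def)
    finally have yH: "y \<in> H" by (simp add: H_def fixed_space_def)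
    have "herm h (g *v a) = herm (g *v y) (g *v a)" using Gr_v[OF gG] by (simp add: y_def)
    also have "\<dots> = herm y a" using Gherm gG by blast
    finally show "herm h (g *v a) = 0" using perpH yH by simp
  qed
  then show "g \<in> G \<and> (\<exists>c. g *v a = c *s a)" using perp_line gG by blast
next
  assume "g \<in> G \<and> (\<exists>c. g *v a = c *s a)"
  then obtain c where gG: "g \<in> G" and gc: "g *v a = c *s a" by blast
  have cnz: "c \<noteq> 0" using eig_nz gG gc by blast
  have ig: "matrix_inv g *v a = inverse c *s a" using inv_eig[OF gG gc] cnz by simp
  have igG: "matrix_inv g \<in> G" using Ginv gG by blast
  have conj: "g ** mpow r j ** matrix_inv g = mpow r j" for j
  proof (rule eqHa)
    show "(g ** mpow r j ** matrix_inv g) *v a = mpow r j *v a"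
      using cnz by (simp add: matrix_vector_mul_assoc[symmetric] ig P_a vector_scalar_commute gc
          vector_smult_assoc)
    show "\<forall>h\<in>H. (g ** mpow r j ** matrix_inv g) *v h = mpow r j *v h"
    proof
      fix h assume hH: "h \<in> H"
      have "matrix_inv g *v h \<in> H" using presH[OF igG ig _ hH] cnz by simp
      then show "(g ** mpow r j ** matrix_inv g) *v h = mpow r j *v h"
        using hH Gr_v[OF gG] by (simp add: matrix_vector_mul_assoc[symmetric] P_H)
    qed
  qed
  have "(\<lambda>p. g ** p ** matrix_inv g) ` P = P"
  proof -
    have "\<forall>p\<in>P. g ** p ** matrix_inv g = p" using conj Pdef by auto
    then show ?thesis by (intro image_fix) blast
  qed
  then show "g \<in> normaliser G P" using gG by (simp add: normaliser_def)
qed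

end

context L begin

definition "M = {\<xi>. \<exists>g\<in>G. g *v a = \<xi> *s a}"

lemma mu_eq: "{\<xi>. \<exists>g\<in>normaliser G P. g *v a = \<xi> *s a} = M"
  unfolding M_def using N_char by blast

lemma M1: "1 \<in> M" unfolding M_def using G1 by force
lemma Mmul: "x \<in> M \<Longrightarrow> y \<in> M \<Longrightarrow> x * y \<in> M"
proof -
  assume "x \<in> M" "y \<in> M"
  then obtain g h where g: "g \<in> G" "g *v a = x *s a" and h: "h \<in> G" "h *v a = y *s a"
    unfolding M_def by blast
  have "(h ** g) *v a = (x * y) *s a"
    using g h by (simp add: matrix_vector_mul_assoc[symmetric] vector_scalar_commute
        vector_smult_assoc mult.commute)
  then show ?thesis unfolding M_def using Gmul[OF h(1) g(1)] by blast
qed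
lemma M0: "0 \<notin> M" unfolding M_def using eig_nz by blast
lemma Mfin: "finite M"
proof -
  let ?f = "\<lambda>g. SOME \<xi>. g *v a = \<xi> *s a"
  have "M \<subseteq> ?f ` G"
  proof
    fix \<xi> assume "\<xi> \<in> M"
    then obtain g where g: "g \<in> G" "g *v a = \<xi> *s a" unfolding M_def by blast
    then have A: "g *v a = ?f g *s a" using someI_ex[of "\<lambda>\<xi>. g *v a = \<xi> *s a"] by blast
    have "?f g = \<xi>" by (rule smult_cancel[OF a_nz trans[OF sym[OF A] g(2)]])
    then show "\<xi> \<in> ?f ` G" using g by blast
  qed
  then show ?thesis using finG finite_subset by blast
qed
lemma Mpow: "x \<in> M \<Longrightarrow> x ^ j \<in> M"
  by (induction j) (simp_all add: M1 Mmul)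
lemma om_M: "\<omega> \<in> M" unfolding M_def using rG r_a by blast

abbreviation "m \<equiv> card M"

lemma M_roots: "x \<in> M \<Longrightarrow> x ^ m = 1"
  using finite_mult_closed_roots[OF Mfin M0] Mmul by blast
lemma m_pos: "m \<ge> 1"
proof -
  have "M \<noteq> {}" using M1 by blast
  then show ?thesis using Mfin by (simp add: card_gt_0_iff Suc_le_eq)
qed
lemma k_dvd_m: "k dvd m" using om_dvd M_roots om_M by blast

lemma M_inv: "x \<in> M \<Longrightarrow> x ^ (m - 1) * x = 1"
proof -
  assume xM: "x \<in> M"
  have "x ^ (m - 1) * x = x ^ Suc (m - 1)" by (simp add: power_Suc2)
  also have "Suc (m - 1) = m" using m_pos by simp
  finally show ?thesis using M_roots[OF xM] by simp
qed

lemma M_eq: "M = {z. z ^ m = 1}"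
proof (rule card_seteq)
  show "finite {z::complex. z ^ m = 1}" using m_pos by (intro finite_roots_unity) simp
  show "M \<subseteq> {z. z ^ m = 1}" using M_roots by blast
  show "card {z::complex. z ^ m = 1} \<le> m" using card_complex_roots_unity m_pos by simp
qed

definition "\<zeta> = exp (2 * of_real pi * \<i> * of_nat 1 / of_nat m)"

lemma zeta_pow: "\<zeta> ^ j = exp (2 * of_real pi * \<i> * of_nat j / of_nat m)"
proof -
  have "\<zeta> ^ j = exp (of_nat j * (2 * of_real pi * \<i> * of_nat 1 / of_nat m))"
    unfolding \<zeta>_def by (rule exp_of_nat_mult[symmetric])
  then show ?thesis by (simp add: algebra_simps)
qed

lemma zeta_1: "\<zeta> ^ j = 1 \<longleftrightarrow> m dvd j"
  using complex_root_unity_eq_1[OF m_pos] zeta_pow by simp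

lemma M_cyc: "M = {\<zeta> ^ j | j. True}"
proof
  show "M \<subseteq> {\<zeta> ^ j | j. True}"
  proof
    fix z assume "z \<in> M"
    then have "z \<in> {z. z ^ m = 1}" using M_roots by blast
    then have "z \<in> {exp(2 * of_real pi * \<i> * of_nat j / of_nat m) | j. j < m}"
      using complex_roots_unity[OF m_pos] by blast
    then obtain j where "z = exp(2 * of_real pi * \<i> * of_nat j / of_nat m)" by blast
    then have "z = \<zeta> ^ j" using zeta_pow by simp
    then show "z \<in> {\<zeta> ^ j | j. True}" by blast
  qed
  show "{\<zeta> ^ j | j. True} \<subseteq> M"
  proof
    fix z assume "z \<in> {\<zeta> ^ j | j. True}"
    then obtain j where "z = \<zeta> ^ j" by blast
    then have "z ^ m = (\<zeta> ^ m) ^ j" by (simp add: power_mult[symmetric] mult.commute)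
    also have "\<dots> = 1" using zeta_1[of m] by simp
    finally have "z \<in> {z. z ^ m = 1}" by simp
    then show "z \<in> M" using M_eq by blast
  qed
qed
lemma zeta_M: "\<zeta> \<in> M"
proof -
  have "\<zeta> \<in> {\<zeta> ^ j | j. True}" by (rule CollectI, rule exI[of _ 1]) simp
  then show ?thesis by (subst M_cyc)
qed

lemma kroots: assumes "z ^ k = 1" shows "\<exists>j. z = \<omega> ^ j"
proof -
  have inj: "inj_on (\<lambda>j. \<omega> ^ j) {..<k}"
  proof (rule inj_onI)
    fix i j assume ij: "i \<in> {..<k}" "j \<in> {..<k}" "\<omega> ^ i = \<omega> ^ j"
    show "i = j"
    proof (rule ccontr)
      assume "i \<noteq> j"
      then consider "i < j" | "j < i" by linarith
      then show False
      proof cases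
        case 1
        then have "\<omega> ^ j = \<omega> ^ i * \<omega> ^ (j - i)" by (simp add: power_add[symmetric])
        then have "\<omega> ^ (j - i) = 1" using ij om_nz by simp
        then have "k dvd j - i" using om_dvd by blast
        then show False using dvd_imp_le[of k "j - i"] 1 ij by auto
      next
        case 2
        then have "\<omega> ^ i = \<omega> ^ j * \<omega> ^ (i - j)" by (simp add: power_add[symmetric])
        then have "\<omega> ^ (i - j) = 1" using ij om_nz by simp
        then have "k dvd i - j" using om_dvd by blast
        then show False using dvd_imp_le[of k "i - j"] 2 ij by auto
      qed
    qed
  qed
  have "(\<lambda>j. \<omega> ^ j) ` {..<k} = {z. z ^ k = 1}"
  proof (rule card_seteq)
    show "finite {z::complex. z ^ k = 1}" using k_pos by (intro finite_roots_unity) simp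
    show "(\<lambda>j. \<omega> ^ j) ` {..<k} \<subseteq> {z. z ^ k = 1}"
    proof
      fix z assume "z \<in> (\<lambda>j. \<omega> ^ j) ` {..<k}"
      then obtain j where "z = \<omega> ^ j" by blast
      moreover have "(\<omega> ^ j) ^ k = (\<omega> ^ k) ^ j" by (simp add: power_mult[symmetric] mult.commute)
      ultimately show "z \<in> {z. z ^ k = 1}" using om_k by simp
    qed
    show "card {z::complex. z ^ k = 1} \<le> card ((\<lambda>j. \<omega> ^ j) ` {..<k})"
      using card_complex_roots_unity k_pos card_image[OF inj] by simp
  qed
  then show ?thesis using assms by blast
qed

end

context L begin

abbreviation "BB \<equiv> {(\<xi> ^ k) *s a | \<xi>. \<xi> \<in> M}"

lemma GB_char: "g \<in> setwise_stab G BB \<longleftrightarrow> g \<in> G \<and> (\<exists>\<eta>\<in>M. g *v a = \<eta> ^ k *s a)"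
proof
  assume "g \<in> setwise_stab G BB"
  then have gG: "g \<in> G" and img: "(\<lambda>x. g *v x) ` BB = BB" by (auto simp: setwise_stab_def)
  have "a \<in> BB" using M1 by force
  then have "g *v a \<in> BB" using img by blast
  then show "g \<in> G \<and> (\<exists>\<eta>\<in>M. g *v a = \<eta> ^ k *s a)" using gG by blast
next
  assume "g \<in> G \<and> (\<exists>\<eta>\<in>M. g *v a = \<eta> ^ k *s a)"
  then obtain \<eta> where gG: "g \<in> G" and eM: "\<eta> \<in> M" and ga: "g *v a = \<eta> ^ k *s a" by blast
  have act: "g *v (\<xi> ^ k *s a) = (\<xi> * \<eta>) ^ k *s a" for \<xi>
    by (simp add: vector_scalar_commute ga vector_smult_assoc power_mult_distrib)
  have "(\<lambda>x. g *v x) ` BB = BB"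
  proof
    show "(\<lambda>x. g *v x) ` BB \<subseteq> BB"
    proof
      fix y assume "y \<in> (\<lambda>x. g *v x) ` BB"
      then obtain \<xi> where "\<xi> \<in> M" "y = g *v (\<xi> ^ k *s a)" by blast
      then show "y \<in> BB" using act Mmul eM by blast
    qed
    show "BB \<subseteq> (\<lambda>x. g *v x) ` BB"
    proof
      fix y assume "y \<in> BB"
      then obtain \<xi> where xM: "\<xi> \<in> M" and y: "y = \<xi> ^ k *s a" by blast
      let ?x = "(\<xi> * \<eta> ^ (m - 1)) ^ k *s a"
      have "g *v ?x = (\<xi> * (\<eta> ^ (m - 1) * \<eta>)) ^ k *s a" by (simp add: act mult.assoc)
      also have "\<dots> = y" using M_inv[OF eM] y by simp
      finally have "y = g *v ?x" by simp
      moreover have "?x \<in> BB" using Mmul[OF xM Mpow[OF eM]] by blast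
      ultimately show "y \<in> (\<lambda>x. g *v x) ` BB" by blast
    qed
  qed
  then show "g \<in> setwise_stab G BB" using gG by (simp add: setwise_stab_def)
qed

lemma P_N: "mpow r j \<in> normaliser G P" using N_char PG P_a by blast

lemma mul_N: "g \<in> normaliser G P \<Longrightarrow> h \<in> normaliser G P \<Longrightarrow> g ** h \<in> normaliser G P"
proof -
  assume "g \<in> normaliser G P" "h \<in> normaliser G P"
  then obtain c d where g: "g \<in> G" "g *v a = c *s a" and h: "h \<in> G" "h *v a = d *s a"
    using N_char by blast
  have "(g ** h) *v a = (d * c) *s a"
    using g h by (simp add: matrix_vector_mul_assoc[symmetric] vector_scalar_commute vector_smult_assoc)
  then show ?thesis using N_char Gmul[OF g(1) h(1)] by blast
qed

lemma split_mpow: "mpow r j ** (mpow r ((k - 1) * j) ** g) = g"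
proof -
  have "j + (k - 1) * j = k * j" using k_pos by (cases k) auto
  then have "mpow r j ** mpow r ((k - 1) * j) = mat 1"
    using mpow_add[of r j "(k - 1) * j"] mpow_1_mult[OF rk, of j] by simp
  then show ?thesis by (simp add: matrix_mul_assoc)
qed

lemma om_inv: "\<omega> ^ ((k - 1) * j) * \<omega> ^ j = 1"
proof -
  have "(k - 1) * j + j = k * j" using k_pos by (cases k) auto
  have "\<omega> ^ ((k - 1) * j) * \<omega> ^ j = \<omega> ^ ((k - 1) * j + j)" by (simp only: power_add)
  also have "\<dots> = \<omega> ^ (k * j)" using \<open>(k - 1) * j + j = k * j\<close> by simp
  also have "\<dots> = (\<omega> ^ k) ^ j" by (simp only: power_mult)
  finally show ?thesis using om_k by simp
qed

lemma fw: assumes cop: "coprime (m div k) k"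
  shows "complement P (normaliser G P) (setwise_stab G BB)"
proof -
  define d where "d = m div k"
  have mkd: "m = k * d" using k_dvd_m by (simp add: d_def)
  have g1: "gcd k d = 1" using cop by (simp add: d_def coprime_iff_gcd_eq_1 gcd.commute)
  have sub: "is_subgroup (setwise_stab G BB)"
    unfolding is_subgroup_def
  proof (intro conjI ballI)
    have "mat 1 *v a = 1 ^ k *s a" by simp
    then show "mat 1 \<in> setwise_stab G BB" using GB_char G1 M1 by blast
  next
    fix g h assume "g \<in> setwise_stab G BB" "h \<in> setwise_stab G BB"
    then obtain x y where g: "g \<in> G" "x \<in> M" "g *v a = x ^ k *s a"
      and h: "h \<in> G" "y \<in> M" "h *v a = y ^ k *s a" using GB_char by blast
    have "(g ** h) *v a = (y * x) ^ k *s a"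
      using g h by (simp add: matrix_vector_mul_assoc[symmetric] vector_scalar_commute
          vector_smult_assoc power_mult_distrib)
    then show "g ** h \<in> setwise_stab G BB" using GB_char Gmul[OF g(1) h(1)] Mmul[OF h(2) g(2)] by blast
  next
    fix g assume "g \<in> setwise_stab G BB"
    then obtain x where g: "g \<in> G" "x \<in> M" "g *v a = x ^ k *s a" using GB_char by blast
    show "invertible g" using Ginvertible g by blast
    have "x ^ k * (x ^ (m - 1)) ^ k = (x ^ (m - 1) * x) ^ k" by (simp add: power_mult_distrib)
    then have "x ^ k * (x ^ (m - 1)) ^ k = 1" using M_inv[OF g(2)] by simp
    then have "matrix_inv g *v a = (x ^ (m - 1)) ^ k *s a" using inv_eig[OF g(1) g(3)] by blast
    then show "matrix_inv g \<in> setwise_stab G BB"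
      using GB_char Ginv[OF g(1)] Mpow[OF g(2)] by blast
  qed
  have subN: "setwise_stab G BB \<subseteq> normaliser G P"
  proof
    fix g assume "g \<in> setwise_stab G BB"
    then obtain x where "g \<in> G" "g *v a = x ^ k *s a" using GB_char by blast
    then show "g \<in> normaliser G P" using N_char by blast
  qed
  have prod: "{p ** h | p h. p \<in> P \<and> h \<in> setwise_stab G BB} = normaliser G P"
  proof
    show "{p ** h | p h. p \<in> P \<and> h \<in> setwise_stab G BB} \<subseteq> normaliser G P"
    proof
      fix x assume "x \<in> {p ** h | p h. p \<in> P \<and> h \<in> setwise_stab G BB}"
      then obtain p h where "x = p ** h" "p \<in> P" "h \<in> setwise_stab G BB" by blast
      moreover then obtain j where "p = mpow r j" using Pdef by blast
      ultimately show "x \<in> normaliser G P" using P_N subN mul_N by blast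
    qed
    show "normaliser G P \<subseteq> {p ** h | p h. p \<in> P \<and> h \<in> setwise_stab G BB}"
    proof
      fix g assume gN: "g \<in> normaliser G P"
      then obtain \<xi> where gG: "g \<in> G" and ga: "g *v a = \<xi> *s a" using N_char by blast
      have xM: "\<xi> \<in> M" using gG ga M_def by blast
      obtain x y where xy: "k * x = d * y + gcd k d" using bezout_nat[of k d] k_pos by auto
      define w where "w = \<xi> ^ (d * y)"
      have "w ^ k = (\<xi> ^ m) ^ y" by (simp add: w_def mkd power_mult[symmetric] mult_ac)
      then have wk: "w ^ k = 1" using M_roots[OF xM] by simp
      have "(w ^ (k - 1)) ^ k = (w ^ k) ^ (k - 1)" by (simp add: power_mult[symmetric] mult.commute)
      then have "(w ^ (k - 1)) ^ k = 1" using wk by simp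
      then obtain j where j: "w ^ (k - 1) = \<omega> ^ j" using kroots by blast
      have "w ^ (k - 1) * w = w ^ Suc (k - 1)" by (simp add: power_Suc2)
      also have "Suc (k - 1) = k" using k_pos by simp
      finally have "w ^ (k - 1) * w = 1" using wk by simp
      have "\<xi> ^ (k * x) = w * \<xi>" using xy g1 by (simp add: w_def power_add)
      then have "w ^ (k - 1) * \<xi> ^ (k * x) = \<xi>"
        using \<open>w ^ (k - 1) * w = 1\<close> by (simp add: mult.assoc[symmetric])
      moreover have "(\<xi> ^ x) ^ k = \<xi> ^ (k * x)" by (simp add: power_mult[symmetric] mult.commute)
      ultimately have xi: "\<xi> = \<omega> ^ j * (\<xi> ^ x) ^ k" using j by simp
      define h where "h = mpow r ((k - 1) * j) ** g"
      have hG: "h \<in> G" using Gmul PG gG h_def by blast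
      have "h *v a = (\<omega> ^ ((k - 1) * j) * \<omega> ^ j * (\<xi> ^ x) ^ k) *s a"
        unfolding h_def using ga xi
        by (simp add: matrix_vector_mul_assoc[symmetric] vector_scalar_commute P_a vector_smult_assoc mult_ac)
      then have "h *v a = (\<xi> ^ x) ^ k *s a" using om_inv by simp
      then have hB: "h \<in> setwise_stab G BB" using GB_char hG Mpow[OF xM] by blast
      have "g = mpow r j ** h" unfolding h_def by (rule split_mpow[symmetric])
      then show "g \<in> {p ** h | p h. p \<in> P \<and> h \<in> setwise_stab G BB}" using hB Pdef by blast
    qed
  qed
  have int: "P \<inter> setwise_stab G BB = {mat 1}"
  proof
    show "{mat 1} \<subseteq> P \<inter> setwise_stab G BB"
    proof -
      have "mat 1 = mpow r 0" by simp
      then have "mat 1 \<in> P" using Pdef by blast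
      moreover have "mat 1 *v a = 1 ^ k *s a" by simp
      then have "mat 1 \<in> setwise_stab G BB" using GB_char G1 M1 by blast
      ultimately show ?thesis by blast
    qed
    show "P \<inter> setwise_stab G BB \<subseteq> {mat 1}"
    proof
      fix p assume "p \<in> P \<inter> setwise_stab G BB"
      then have pP: "p \<in> P" and pB: "p \<in> setwise_stab G BB" by auto
      obtain j where p: "p = mpow r j" using pP Pdef by blast
      obtain \<eta> where eM: "\<eta> \<in> M" and pa: "p *v a = \<eta> ^ k *s a" using pB GB_char by blast
      have "\<omega> ^ j = \<eta> ^ k" by (rule smult_cancel[OF a_nz trans[OF sym[OF P_a[of j]] pa[unfolded p]]])
      have z1: "(\<omega> ^ j) ^ k = 1"
      proof -
        have "(\<omega> ^ j) ^ k = (\<omega> ^ k) ^ j" by (simp add: power_mult[symmetric] mult.commute)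
        then show ?thesis using om_k by simp
      qed
      have z2: "(\<omega> ^ j) ^ d = 1"
      proof -
        have "(\<eta> ^ k) ^ d = \<eta> ^ m" using mkd by (simp add: power_mult)
        then show ?thesis using \<open>\<omega> ^ j = \<eta> ^ k\<close> M_roots[OF eM] by simp
      qed
      have "(\<omega> ^ j) ^ gcd k d = 1" using pow_gcd_1[OF z1 z2] k_pos by simp
      then have "\<omega> ^ j = 1" using g1 by simp
      then show "p \<in> {mat 1}" using mpow_eq1 p by simp
    qed
  qed
  show ?thesis unfolding complement_def using sub subN prod int by blast
qed

end

context L begin

lemma bw: assumes Dsub: "D \<subseteq> {c *s a | c. True}"
  and comp: "complement P (normaliser G P) (setwise_stab G D)"
  shows "coprime (m div k) k"
proof -
  define d where "d = m div k"
  have mkd: "m = k * d" using k_dvd_m by (simp add: d_def)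
  let ?GD = "setwise_stab G D"
  have sub: "is_subgroup ?GD" and subN: "?GD \<subseteq> normaliser G P"
    and prod: "{p ** h | p h. p \<in> P \<and> h \<in> ?GD} = normaliser G P"
    and int: "P \<inter> ?GD = {mat 1}" using comp by (auto simp: complement_def)
  have K: "h \<in> ?GD" if "h \<in> G" "h *v a = a" for h
  proof -
    have "\<forall>x\<in>D. h *v x = x"
    proof
      fix x assume "x \<in> D"
      then obtain c where "x = c *s a" using Dsub by blast
      then show "h *v x = x" using that by (simp add: vector_scalar_commute)
    qed
    then have "(\<lambda>x. h *v x) ` D = D" by (intro image_fix) blast
    then show ?thesis using that by (simp add: setwise_stab_def)
  qed
  have claim1: "z = 1" if g: "g \<in> ?GD" "g *v a = z *s a" and zk: "z ^ k = 1" for g z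
  proof -
    obtain j where j: "z = \<omega> ^ j" using kroots zk by blast
    have gG: "g \<in> G" using g by (simp add: setwise_stab_def)
    define h where "h = mpow r ((k - 1) * j) ** g"
    have hG: "h \<in> G" using Gmul PG gG h_def by blast
    have "h *v a = (\<omega> ^ ((k - 1) * j) * \<omega> ^ j) *s a"
      unfolding h_def using g j
      by (simp add: matrix_vector_mul_assoc[symmetric] vector_scalar_commute P_a vector_smult_assoc mult_ac)
    then have "h *v a = a" using om_inv by simp
    then have hD: "h \<in> ?GD" using K hG by blast
    have gh: "g = mpow r j ** h" unfolding h_def by (rule split_mpow[symmetric])
    have hinv: "invertible h" "matrix_inv h \<in> ?GD" using sub hD by (auto simp: is_subgroup_def)
    have "g ** matrix_inv h = mpow r j"
      using gh inv_props(1)[OF hinv(1)] by (simp add: matrix_mul_assoc[symmetric])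
    moreover have "g ** matrix_inv h \<in> ?GD" using sub g(1) hinv(2) by (simp add: is_subgroup_def)
    ultimately have "mpow r j \<in> P \<inter> ?GD" using Pdef by auto
    then have "mpow r j = mat 1" using int by blast
    then have "\<omega> ^ j *s a = 1 *s a" using P_a[of j] by simp
    then show "z = 1" using j smult_cancel[OF a_nz] by blast
  qed
  obtain g where gN: "g \<in> normaliser G P" and ga: "g *v a = \<zeta> *s a"
    using zeta_M mu_eq by blast
  then obtain p h where p: "p \<in> P" and hD: "h \<in> ?GD" and gph: "g = p ** h"
    using prod by blast
  obtain j where pj: "p = mpow r j" using p Pdef by blast
  obtain s where hs: "h *v a = s *s a" using N_char hD subN by blast
  have hG: "h \<in> G" using hD by (simp add: setwise_stab_def)
  have sM: "s \<in> M" using hG hs M_def by blast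
  have "g *v a = (s * \<omega> ^ j) *s a"
    using gph pj hs by (simp add: matrix_vector_mul_assoc[symmetric] vector_scalar_commute P_a vector_smult_assoc)
  then have zeta: "\<zeta> = s * \<omega> ^ j" by (rule smult_cancel[OF a_nz trans[OF sym[OF ga]]])
  define e where "e = gcd d k"
  have e0: "e > 0" using k_pos by (simp add: e_def)
  have ed: "e dvd d" and ek: "e dvd k" by (simp_all add: e_def)
  have me: "m div e = k * (d div e)" using mkd ed by (simp add: div_mult_swap)
  have "\<omega> ^ (j * (m div e)) = 1" using om_dvd me by simp
  then have z1: "\<zeta> ^ (m div e) = s ^ (m div e)"
    using zeta by (simp add: power_mult_distrib power_mult[symmetric])
  have "mpow h (m div e) \<in> ?GD" using subgroup_mpow[OF sub hD] .
  moreover have "mpow h (m div e) *v a = s ^ (m div e) *s a" using mpow_eig[OF hs] .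
  moreover have "(s ^ (m div e)) ^ k = 1"
  proof -
    obtain d' where d': "d = e * d'" using ed by blast
    obtain k' where k': "k = e * k'" using ek by blast
    have "(m div e) * k = m * (k div e)" using me mkd d' k' e0 by simp
    then have "(s ^ (m div e)) ^ k = (s ^ m) ^ (k div e)" by (simp add: power_mult[symmetric])
    then show ?thesis using M_roots[OF sM] by simp
  qed
  ultimately have "s ^ (m div e) = 1" using claim1 by blast
  then have "\<zeta> ^ (m div e) = 1" using z1 by simp
  then have mdv: "m dvd m div e" using zeta_1 by blast
  have mpos: "m > 0" using m_pos by simp
  have emdvd: "e dvd m" using ek k_dvd_m dvd_trans by blast
  obtain q where q: "m = e * q" using emdvd by blast
  have qpos: "q > 0" using q mpos by (cases q) auto
  have mq: "m div e = q" using q e0 by simp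
  have "m \<le> q" using mdv mq qpos by (simp add: dvd_imp_le)
  then have "e * q \<le> 1 * q" using q by simp
  then have "e \<le> 1" using qpos by (simp only: mult_le_cancel2)
  then have "e = 1" using e0 by simp
  then show ?thesis by (simp add: coprime_iff_gcd_eq_1 e_def d_def)
qed

lemma main:
  "let N = normaliser G P;
             mu = {\<xi>. \<exists>g\<in>N. g *v a = \<xi> *s a};
             m = card mu;
             B = {(\<xi> ^ k) *s a | \<xi>. \<xi> \<in> mu}
         in finite mu \<and> (\<exists>\<zeta>. mu = {\<zeta> ^ j | j. True}) \<and> k dvd m
          \<and> (coprime (m div k) k \<longrightarrow> complement P N (setwise_stab G B))
          \<and> (\<forall>D. D \<subseteq> {c *s a | c. True} \<and> complement P N (setwise_stab G D)
                 \<longrightarrow> coprime (m div k) k)"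
  unfolding Let_def mu_eq using Mfin M_cyc k_dvd_m fw bw by blast

end

theorem lemma5p2:
  fixes G P :: "('n::finite) cmat set" and r :: "'n cmat" and a :: "complex ^ 'n" and k :: nat
  assumes "unitary_reflection_group G"
    and "primitive G"
    and "CARD('n) \<ge> 2"
    and "parabolic_rank1 G P"
    and "r \<in> G" and "is_reflection r"
    and "P = {mpow r j | j. True}"
    and "k = mat_order r"
    and "is_root r a"
  shows "let N = normaliser G P;
             mu = {\<xi>. \<exists>g\<in>N. g *v a = \<xi> *s a};
             m = card mu;
             B = {(\<xi> ^ k) *s a | \<xi>. \<xi> \<in> mu}
         in finite mu \<and> (\<exists>\<zeta>. mu = {\<zeta> ^ j | j. True}) \<and> k dvd m
          \<and> (coprime (m div k) k \<longrightarrow> complement P N (setwise_stab G B))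
          \<and> (\<forall>D. D \<subseteq> {c *s a | c. True} \<and> complement P N (setwise_stab G D)
                 \<longrightarrow> coprime (m div k) k)"
proof -
  interpret L G P r a k
    using assms by unfold_locales (auto simp: unitary_reflection_group_def)
  show ?thesis by (rule main)
qed

end
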